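(* Let $N\geq3$ and let $(M,g)$ be an $N$-dimensional Riemannian model with pole $o$ and metric $ds^2=dr^2+\psi^2(r)\,d\omega^2$, where $\psi$ is a $C^\infty$ nonnegative function on $[0,+\infty)$, positive on $(0,+\infty)$, with $\psi'(0)=1$, $\psi^{(2k)}(0)=0$ for all $k\geq0$, and such that $\psi(r)=Ae^{br^{a+1}}$ for $r\geq R$, for some $R,A,b>0$ and $a\geq0$. Then for all $u\in C_c^\infty(M\setminus B_R(o))$, $$\int_M\Big(\frac{\partial u}{\partial r}\Big)^2dv_g\geq\Big(\frac{N-1}{2}\Big)^2(a+1)^2b^2\int_M r^{2a}u^2dv_g+\frac14\int_M\frac{u^2}{r^2}dv_g+\frac{2ba(a+1)(N-1)}{4}\int_M r^{a-1}u^2dv_g.$$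
   Context: $d\omega^2$ is the standard metric on $\mathbb{S}^{N-1}$, $r$ the geodesic distance from $o$, $B_R(o)$ the geodesic ball of radius $R$ centered at $o$, $\frac{\partial u}{\partial r}$ the radial derivative, $dv_g$ the Riemannian volume. *)

theory Defs
  imports "HOL-Analysis.Analysis"
begin

text \<open>C-infinity functions on R^N: differentiable everywhere, and all first partial
  derivatives again C-infinity (coinductively), i.e. partial derivatives of all orders exist.\<close>
coinductive smooth_fun :: "(real^('n::finite) \<Rightarrow> real) \<Rightarrow> bool" where
  "(\<forall>x. u differentiable (at x)) \<Longrightarrow>
   (\<forall>i. smooth_fun (\<lambda>x. frechet_derivative u (at x) (axis i 1))) \<Longrightarrow> smooth_fun u"

definition smooth_halfline_derivs :: "(nat \<Rightarrow> real \<Rightarrow> real) \<Rightarrow> (real \<Rightarrow> real) \<Rightarrow> bool" where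
  "smooth_halfline_derivs D \<psi> \<longleftrightarrow>
     (\<forall>x\<ge>0. D 0 x = \<psi> x) \<and>
     (\<forall>k. \<forall>x\<ge>0. (D k has_real_derivative D (Suc k) x) (at x within {0..}))"

text \<open>The Riemannian model with pole o and metric dr^2 + psi(r)^2 dw^2 is realised as R^N
  (normal polar coordinates at the pole o = 0): r(x) = norm x, the Riemannian volume is
  dv_g = (psi(r)/r)^(N-1) dx, and the radial derivative is the derivative along x / norm x.\<close>
definition model_density :: "(real \<Rightarrow> real) \<Rightarrow> real^('n::finite) \<Rightarrow> real" where
  "model_density \<psi> x = (\<psi> (norm x) / norm x) ^ (CARD('n) - 1)"

definition radial_deriv :: "(real^('n::finite) \<Rightarrow> real) \<Rightarrow> real^'n \<Rightarrow> real" where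
  "radial_deriv u x = frechet_derivative u (at x) (x /\<^sub>R norm x)"

definition model_integral :: "(real \<Rightarrow> real) \<Rightarrow> (real^('n::finite) \<Rightarrow> real) \<Rightarrow> real" where
  "model_integral \<psi> f = (\<integral>x. f x * model_density \<psi> x \<partial>lborel)"

end

theory Submission imports Defs "HOL-Real_Asymp.Real_Asymp" begin


lemma scale_integral:
  fixes k :: "real^'n \<Rightarrow> real"
  assumes c: "c \<noteq> 0" and km: "k \<in> borel_measurable borel"
  shows "integral\<^sup>L lborel k = \<bar>c\<bar>^CARD('n) * integral\<^sup>L lborel (\<lambda>x. k (c *\<^sub>R x))"
proof -
  have "integral\<^sup>L lborel k = integral\<^sup>L (density (distr lborel borel (\<lambda>x. 0 + c *\<^sub>R x)) (\<lambda>_. \<bar>c\<bar>^DIM(real^'n))) k"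
    using lborel_affine[OF c, of 0] by metis
  also have "\<dots> = \<bar>c\<bar>^CARD('n) * integral\<^sup>L lborel (\<lambda>x. k (c *\<^sub>R x))"
    apply (subst integral_density)
    using km apply (auto simp: integral_distr)
    done
  finally show ?thesis .
qed

lemma int_cpt:
  fixes f :: "real^'n \<Rightarrow> real"
  assumes "continuous_on K f" "compact K" "\<And>x. x \<notin> K \<Longrightarrow> f x = 0"
  shows "integrable lborel f"
proof -
  have "integrable lborel (\<lambda>x. indicator K x *\<^sub>R f x)"
    by (rule borel_integrable_compact) (use assms in auto)
  also have "(\<lambda>x. indicator K x *\<^sub>R f x) = f"
    using assms(3) by (intro ext) (auto simp: indicator_def)
  finally show ?thesis .
qed

lemma deriv_seq:
  fixes f :: "real \<Rightarrow> real"
  assumes "(f has_real_derivative D) (at x)" "h \<longlonglongrightarrow> 0" "\<And>j. h j \<noteq> 0"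
  shows "(\<lambda>j. (f (x + h j) - f x) / h j) \<longlonglongrightarrow> D"
proof -
  have "((\<lambda>h. (f (x + h) - f x) / h) \<longlongrightarrow> D) (at 0)"
    using assms(1) by (simp add: DERIV_def)
  moreover have "filterlim h (at 0) sequentially"
    by (rule filterlim_atI) (use assms in auto)
  ultimately show ?thesis using filterlim_compose by blast
qed

lemma euler_scaling:
  fixes k :: "real^'n \<Rightarrow> real" and E :: "real \<Rightarrow> real^'n \<Rightarrow> real"
  assumes kcont: "continuous_on UNIV k"
    and B: "B \<ge> 0" and ksupp: "\<And>x. B < norm x \<Longrightarrow> k x = 0"
    and deriv: "\<And>x \<mu>. \<mu> > 0 \<Longrightarrow> ((\<lambda>l. k (l *\<^sub>R x)) has_real_derivative E \<mu> x) (at \<mu>)"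
    and bnd: "\<And>x \<mu>. 1/2 \<le> \<mu> \<Longrightarrow> \<mu> \<le> 2 \<Longrightarrow> \<bar>E \<mu> x\<bar> \<le> C * indicator (cball 0 (2*B)) x"
  shows "integrable lborel (E 1)"
    "integral\<^sup>L lborel (E 1) = - real CARD('n) * integral\<^sup>L lborel k"
proof -
  define h :: "nat \<Rightarrow> real" where "h j = 1 / (real j + 2)" for j
  have h0: "h \<longlonglongrightarrow> 0" unfolding h_def by real_asymp
  have hpos: "0 < h j" "h j \<le> 1/2" for j unfolding h_def by (auto simp: field_simps)
  have hne: "h j \<noteq> 0" for j using hpos(1)[of j] by simp
  define s where "s j x = (k ((1 + h j) *\<^sub>R x) - k x) / h j" for j x
  have km: "k \<in> borel_measurable borel" by (rule borel_measurable_continuous_onI[OF kcont])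
  have kcomp: "continuous_on UNIV (\<lambda>x. k (c *\<^sub>R x))" for c
    by (rule continuous_on_compose2[OF kcont]) (auto intro!: continuous_intros)
  have kint_c: "integrable lborel (\<lambda>x. k (c *\<^sub>R x))" if "c > 0" for c
  proof (rule int_cpt[where K="cball 0 (B / c)"])
    show "continuous_on (cball 0 (B / c)) (\<lambda>x. k (c *\<^sub>R x))"
      using kcomp continuous_on_subset by blast
    fix x assume "x \<notin> cball (0::real^'n) (B / c)"
    then have "B < norm (c *\<^sub>R x)" using that by (auto simp: field_simps)
    then show "k (c *\<^sub>R x) = 0" by (rule ksupp)
  qed simp
  have kint: "integrable lborel k" using kint_c[of 1] by simp
  have sm: "s j \<in> borel_measurable borel" for j
    unfolding s_def by (intro borel_measurable_continuous_onI continuous_intros kcomp kcont) (simp add: hne)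
  have wint: "integrable lborel (\<lambda>x::real^'n. C * indicator (cball 0 (2*B)) x :: real)"
    by (intro integrable_mult_right integrable_real_indicator) (use emeasure_bounded_finite[of "cball (0::real^'n) (2*B)"] in auto)
  have lim: "(\<lambda>j. s j x) \<longlonglongrightarrow> E 1 x" for x
    using deriv_seq[OF deriv[of 1 x] h0 hne] unfolding s_def by (simp add: add.commute)
  have Em: "E 1 \<in> borel_measurable borel"
    by (rule borel_measurable_LIMSEQ_real[OF lim sm]) 
  have sm': "s j \<in> borel_measurable lborel" for j using sm[of j] by simp
  have Em': "E 1 \<in> borel_measurable lborel" using Em by simp
  have bound: "norm (s j x) \<le> C * indicator (cball 0 (2*B)) x" for j x
  proof -
    have "\<exists>z. 1 < z \<and> z < 1 + h j \<and> (k ((1 + h j) *\<^sub>R x) - k (1 *\<^sub>R x) = (1 + h j - 1) * E z x)"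
      by (rule MVT2) (use hpos[of j] deriv in auto)
    then obtain z where z: "1 < z" "z < 1 + h j" "k ((1 + h j) *\<^sub>R x) - k x = h j * E z x" by auto
    then have "s j x = E z x" unfolding s_def using hpos[of j] by auto
    then show ?thesis using bnd[of z x] z hpos[of j] by auto
  qed
  show Eint: "integrable lborel (E 1)"
    by (rule integrable_dominated_convergence[where s=s, OF Em' sm' wint]) (use lim bound in auto)
  have conv: "(\<lambda>j. integral\<^sup>L lborel (s j)) \<longlonglongrightarrow> integral\<^sup>L lborel (E 1)"
    by (rule integral_dominated_convergence[where s=s, OF Em' sm' wint]) (use lim bound in auto)
  have sc: "integral\<^sup>L lborel (\<lambda>x. k (c *\<^sub>R x)) = integral\<^sup>L lborel k / c ^ CARD('n)" if "c > 0" for c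
    using scale_integral[OF _ km, of c] that by (simp add: field_simps)
  have si: "integral\<^sup>L lborel (s j) = integral\<^sup>L lborel k * ((inverse (1 + h j) ^ CARD('n) - inverse 1 ^ CARD('n)) / h j)" for j
  proof -
    have "integral\<^sup>L lborel (s j) = (integral\<^sup>L lborel (\<lambda>x. k ((1 + h j) *\<^sub>R x)) - integral\<^sup>L lborel k) / h j"
      unfolding s_def using kint kint_c[of "1 + h j"] hpos[of j] by simp
    also have "\<dots> = integral\<^sup>L lborel k * ((inverse (1 + h j) ^ CARD('n) - inverse 1 ^ CARD('n)) / h j)"
      using sc[of "1 + h j"] hpos[of j] by (simp add: field_simps power_inverse)
    finally show ?thesis .
  qed
  have dinv: "((\<lambda>l. inverse l ^ CARD('n)) has_real_derivative - real CARD('n)) (at 1)"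
    by (auto intro!: derivative_eq_intros)
  have "(\<lambda>j. integral\<^sup>L lborel (s j)) \<longlonglongrightarrow> integral\<^sup>L lborel k * (- real CARD('n))"
    unfolding si by (intro tendsto_mult tendsto_const deriv_seq[OF dinv h0]) (use hne in auto)
  with conv show "integral\<^sup>L lborel (E 1) = - real CARD('n) * integral\<^sup>L lborel k"
    using LIMSEQ_unique by (metis mult.commute)
qed


lemma rho_deriv:
  fixes A b a r :: real and m :: nat
  assumes r: "r > 0"
  shows "((\<lambda>r. (A * exp (b * r powr (a + 1)) / r) ^ m) has_real_derivative
     (A * exp (b * r powr (a + 1)) / r) ^ m * (real m * b * (a + 1) * r powr a - real m / r)) (at r)"
proof -
  have "((\<lambda>r. (A * exp (b * r powr (a + 1)) / r) ^ m) has_real_derivative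
     real m * (A * exp (b * r powr (a + 1)) / r) ^ (m - 1) *
       ((A * (exp (b * r powr (a + 1)) * (b * ((a + 1) * r powr a))) * r - A * exp (b * r powr (a + 1))) / r^2)) (at r)"
    using r by (auto intro!: derivative_eq_intros simp: power2_eq_square)
  moreover have "real m * (A * exp (b * r powr (a + 1)) / r) ^ (m - 1) *
       ((A * (exp (b * r powr (a + 1)) * (b * ((a + 1) * r powr a))) * r - A * exp (b * r powr (a + 1))) / r^2)
     = (A * exp (b * r powr (a + 1)) / r) ^ m * (real m * b * (a + 1) * r powr a - real m / r)"
  proof (cases m)
    case 0 then show ?thesis by simp
  next
    case (Suc p)
    then show ?thesis using r by (simp add: field_simps power2_eq_square)
  qed
  ultimately show ?thesis by simp
qed



definition Fm :: "real \<Rightarrow> real \<Rightarrow> real \<Rightarrow> real \<Rightarrow> real" where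
  "Fm cc b a r = cc * b * (a + 1) * r powr a - 1 / (2 * r)"
definition Fd :: "real \<Rightarrow> real \<Rightarrow> real \<Rightarrow> real \<Rightarrow> real" where
  "Fd cc b a r = cc * b * (a + 1) * a * r powr (a - 1) + 1 / (2 * r^2)"
definition rhom :: "real \<Rightarrow> real \<Rightarrow> real \<Rightarrow> nat \<Rightarrow> real \<Rightarrow> real" where
  "rhom A b a m r = (A * exp (b * r powr (a + 1)) / r) ^ m"
definition gm :: "real \<Rightarrow> real \<Rightarrow> real \<Rightarrow> nat \<Rightarrow> real \<Rightarrow> real" where
  "gm A b a m r = Fm (real m / 2) b a r * rhom A b a m r / r"
definition Gd :: "real \<Rightarrow> real \<Rightarrow> real \<Rightarrow> nat \<Rightarrow> real \<Rightarrow> real" where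
  "Gd A b a m r = (rhom A b a m r * (Fd (real m / 2) b a r
     + 2 * (real m / 2 * b * (a + 1) * r powr a) * Fm (real m / 2) b a r)
     - (real m + 1) * gm A b a m r) / r"

lemma Fm_deriv: "r > 0 \<Longrightarrow> (Fm cc b a has_real_derivative Fd cc b a r) (at r)"
  unfolding Fm_def[abs_def] Fd_def
  by (auto intro!: derivative_eq_intros simp: power2_eq_square field_simps)

lemma rhom_deriv: "r > 0 \<Longrightarrow> (rhom A b a m has_real_derivative
   rhom A b a m r * (real m * b * (a + 1) * r powr a - real m / r)) (at r)"
  unfolding rhom_def[abs_def] by (rule rho_deriv)

lemma gm_deriv:
  assumes r: "r > 0"
  shows "(gm A b a m has_real_derivative Gd A b a m r) (at r)"
proof -
  let ?c = "real m / 2"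
  have "(gm A b a m has_real_derivative
     ((Fd ?c b a r * rhom A b a m r + Fm ?c b a r * (rhom A b a m r * (real m * b * (a + 1) * r powr a - real m / r))) * r
       - Fm ?c b a r * rhom A b a m r) / r^2) (at r)"
    unfolding gm_def[abs_def]
    using r by (auto intro!: derivative_eq_intros Fm_deriv rhom_deriv simp: power2_eq_square)
  moreover have "((Fd ?c b a r * rhom A b a m r + Fm ?c b a r * (rhom A b a m r * (real m * b * (a + 1) * r powr a - real m / r))) * r
       - Fm ?c b a r * rhom A b a m r) / r^2 = Gd A b a m r"
    unfolding Gd_def gm_def using r by (simp add: field_simps power2_eq_square)
  ultimately show ?thesis by simp
qed



lemma key_alg:
  fixes r U D :: real
  assumes r: "r > 0" and P: "rhom A b a m r \<ge> 0"
  shows "(D / r)^2 * rhom A b a m r + (2 * U * D * gm A b a m r + U^2 * Gd A b a m r * r + (real m + 1) * (U^2 * gm A b a m r))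
    \<ge> (real m / 2)^2 * (a + 1)^2 * b^2 * (r powr (2 * a) * U^2 * rhom A b a m r)
      + 1 / 4 * (U^2 / r^2 * rhom A b a m r)
      + 2 * b * a * (a + 1) * real m / 4 * (r powr (a - 1) * U^2 * rhom A b a m r)"
proof -
  define P where "P = rhom A b a m r"
  define p where "p = r powr a"
  have p2: "r powr (2 * a) = p * p" unfolding p_def by (simp add: powr_add[symmetric])
  have p1: "r powr (a - 1) = p / r" unfolding p_def using r by (simp add: powr_diff)
  have eq: "(D / r)^2 * P + (2 * U * D * gm A b a m r + U^2 * Gd A b a m r * r + (real m + 1) * (U^2 * gm A b a m r))
    - ((real m / 2)^2 * (a + 1)^2 * b^2 * (r powr (2 * a) * U^2 * P)
      + 1 / 4 * (U^2 / r^2 * P)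
      + 2 * b * a * (a + 1) * real m / 4 * (r powr (a - 1) * U^2 * P))
    = P * (D / r + U * Fm (real m / 2) b a r)^2"
    unfolding gm_def Gd_def Fm_def Fd_def p2 p1 P_def[symmetric] p_def[symmetric]
    using r by (simp add: field_simps power2_eq_square) (simp add: algebra_simps)?
  have "P * (D / r + U * Fm (real m / 2) b a r)^2 \<ge> 0" using P unfolding P_def by simp
  then show ?thesis using eq unfolding P_def by linarith
qed


lemma cbound:
  fixes f :: "'a::metric_space \<Rightarrow> real"
  assumes "compact K" "continuous_on K f"
  shows "\<exists>M\<ge>0. \<forall>x\<in>K. \<bar>f x\<bar> \<le> M"
proof -
  have "bounded (f ` K)" by (rule compact_imp_bounded[OF compact_continuous_image[OF assms(2,1)]])
  then obtain M where "\<forall>y\<in>f ` K. norm y \<le> M" by (auto simp: bounded_iff)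
  then show ?thesis by (intro exI[of _ "max 0 M"]) auto
qed

lemma lin_expand:
  fixes L :: "real^'n \<Rightarrow> real"
  assumes "linear L"
  shows "L v = (\<Sum>i\<in>UNIV. v$i * L (axis i 1))"
proof -
  have "L v = L (\<Sum>i\<in>UNIV. v$i *\<^sub>R axis i 1)"
    using basis_expansion[of v] by (simp add: scalar_mult_eq_scaleR)
  also have "\<dots> = (\<Sum>i\<in>UNIV. v$i * L (axis i 1))"
    using assms by (simp add: linear_sum linear_scale o_def)
  finally show ?thesis .
qed

theorem corollary3p1:
  fixes \<psi> :: "real \<Rightarrow> real" and D :: "nat \<Rightarrow> real \<Rightarrow> real"
    and R A b a :: real and u :: "real^'n \<Rightarrow> real"
  assumes N: "CARD('n) \<ge> 3"
    and psi_smooth: "smooth_halfline_derivs D \<psi>"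
    and psi_nonneg: "\<forall>r\<ge>0. \<psi> r \<ge> 0"
    and psi_pos: "\<forall>r>0. \<psi> r > 0"
    and psi_d1: "D 1 0 = 1"
    and psi_even: "\<forall>k. D (2 * k) 0 = 0"
    and R: "R > 0" and A: "A > 0" and b: "b > 0" and a: "a \<ge> 0"
    and psi_tail: "\<forall>r\<ge>R. \<psi> r = A * exp (b * r powr (a + 1))"
    and u_smooth: "smooth_fun u"
    and u_cpt: "compact (closure {x. u x \<noteq> 0})"
    and u_supp: "closure {x. u x \<noteq> 0} \<subseteq> {x. norm x \<ge> R}"
  shows "model_integral \<psi> (\<lambda>x. (radial_deriv u x)\<^sup>2)
     \<ge> ((real CARD('n) - 1) / 2)\<^sup>2 * (a + 1)\<^sup>2 * b\<^sup>2
          * model_integral \<psi> (\<lambda>x. norm x powr (2 * a) * (u x)\<^sup>2)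
       + 1 / 4 * model_integral \<psi> (\<lambda>x. (u x)\<^sup>2 / (norm x)\<^sup>2)
       + 2 * b * a * (a + 1) * (real CARD('n) - 1) / 4
          * model_integral \<psi> (\<lambda>x. norm x powr (a - 1) * (u x)\<^sup>2)"
proof -
  define m where "m = CARD('n) - 1"
  have nm: "real CARD('n) = real m + 1" using N unfolding m_def by (simp add: of_nat_diff)
  have nm1: "real CARD('n) - 1 = real m" using nm by simp
  define S where "S = closure {x. u x \<noteq> 0}"
  have Scpt: "compact S" using u_cpt S_def by simp
  have Sclosed: "closed S" unfolding S_def by simp
  have uS: "u x \<noteq> 0 \<Longrightarrow> x \<in> S" for x unfolding S_def by (rule subsetD[OF closure_subset]) simp
  have Snorm: "x \<in> S \<Longrightarrow> R \<le> norm x" for x using subsetD[OF u_supp, of x] unfolding S_def by simp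
  obtain B where B: "\<And>x. x \<in> S \<Longrightarrow> norm x \<le> B" "B \<ge> R"
  proof -
    from compact_imp_bounded[OF Scpt] obtain e where "\<forall>x\<in>S. norm x \<le> e" by (auto simp: bounded_iff)
    then show ?thesis using that[of "max e R"] by (meson max.cobounded1 max.cobounded2 order_trans)
  qed
  have Bpos: "B > 0" using B R by simp
  from u_smooth have udiff: "\<And>x. u differentiable (at x)"
    and pdsm: "\<And>i. smooth_fun (\<lambda>x. frechet_derivative u (at x) (axis i 1))"
    by (auto elim: smooth_fun.cases)
  define Du where "Du y = frechet_derivative u (at y)" for y
  have uder: "(u has_derivative Du y) (at y)" for y using frechet_derivative_works[THEN iffD1, OF udiff[of y]] unfolding Du_def .
  have lin: "linear (Du y)" for y unfolding Du_def by (rule linear_frechet_derivative[OF udiff])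
  have ucont: "continuous_on UNIV u"
    by (rule differentiable_imp_continuous_on) (use udiff in \<open>auto simp: differentiable_on_def intro: differentiable_at_withinI\<close>)
  have pdcont: "continuous_on UNIV (\<lambda>y. Du y (axis i 1))" for i
  proof -
    from pdsm[of i] have "\<And>x. (\<lambda>x. frechet_derivative u (at x) (axis i 1)) differentiable (at x)"
      by (auto elim: smooth_fun.cases)
    then show ?thesis unfolding Du_def
      by (intro differentiable_imp_continuous_on) (auto simp: differentiable_on_def intro: differentiable_at_withinI)
  qed
  have expand: "Du y v = (\<Sum>i\<in>UNIV. v$i * Du y (axis i 1))" for y v by (rule lin_expand[OF lin])
  have Dxcont: "continuous_on UNIV (\<lambda>y. Du y y)"
  proof -
    have eq: "(\<lambda>y. Du y y) = (\<lambda>y. \<Sum>i\<in>UNIV. y$i * Du y (axis i 1))" by (intro ext expand)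
    show ?thesis unfolding eq
      by (intro continuous_intros pdcont linear_continuous_on bounded_linear_vec_nth)
  qed
  have Du0: "Du y = (\<lambda>h. 0)" if "y \<notin> S" for y
  proof -
    have "((\<lambda>x. 0::real) has_derivative (\<lambda>h. 0)) (at y)" by simp
    then have "(u has_derivative (\<lambda>h. 0)) (at y)"
      by (rule has_derivative_transform_within_open[where s="- S"]) (use Sclosed that uS in auto)
    then show ?thesis unfolding Du_def by (rule frechet_derivative_at[symmetric])
  qed
  define gg where "gg r = gm A b a m (max (R/2) r)" for r
  define GG where "GG r = Gd A b a m (max (R/2) r)" for r
  define k where "k x = (u x)^2 * gg (norm x)" for x
  define E where "E \<mu> x = 2 * u (\<mu> *\<^sub>R x) * Du (\<mu> *\<^sub>R x) x * gg (\<mu> * norm x)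
      + (u (\<mu> *\<^sub>R x))^2 * GG (\<mu> * norm x) * norm x" for \<mu> x
  have gmcont: "continuous_on {0<..} (gm A b a m)"
    by (rule continuous_at_imp_continuous_on) (metis DERIV_isCont gm_deriv greaterThan_iff)
  have Gdcont: "continuous_on {0<..} (Gd A b a m)"
    unfolding Gd_def[abs_def] gm_def Fm_def Fd_def rhom_def by (intro continuous_intros) auto
  have rhomcont: "continuous_on {0<..} (rhom A b a m)"
    unfolding rhom_def[abs_def] by (intro continuous_intros) auto
  have ggcont: "continuous_on UNIV gg"
    unfolding gg_def by (rule continuous_on_compose2[OF gmcont]) (use R in \<open>auto intro!: continuous_intros\<close>)
  have kcont: "continuous_on UNIV k"
  proof -
    have "continuous_on UNIV (\<lambda>x. gg (norm x))"
      by (rule continuous_on_compose2[OF ggcont]) (auto intro: continuous_intros)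
    then show ?thesis unfolding k_def by (intro continuous_intros ucont)
  qed
  have ksupp: "k x = 0" if "B < norm x" for x
    using B(1)[of x] that uS[of x] unfolding k_def by force

  have linsc: "Du y (c *\<^sub>R v) = c * Du y v" for y c v
    using linear_scale[OF lin] by simp
  have deriv: "((\<lambda>l. k (l *\<^sub>R x)) has_real_derivative E \<mu> x) (at \<mu>)" if \<mu>: "\<mu> > 0" for x \<mu>
  proof (cases "\<mu> * norm x > R/2")
    case True
    have nx: "norm x > 0" using True R \<mu> by (cases "norm x = 0") auto
    define Op where "Op = {R / (2 * norm x)<..}"
    have Oopen: "open Op" unfolding Op_def by simp
    have muO: "\<mu> \<in> Op" unfolding Op_def using True nx by (simp add: field_simps)
    have inO: "l > 0 \<and> l * norm x > R/2" if "l \<in> Op" for l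
    proof -
      have "l * norm x > R/2" using that nx unfolding Op_def by (simp add: field_simps)
      moreover have "l > 0" using calculation R nx by (metis divide_pos_pos zero_less_mult_pos2 zero_less_numeral order_less_trans)
      ultimately show ?thesis by simp
    qed
    have sd: "((\<lambda>l. l *\<^sub>R x) has_derivative (\<lambda>h. h *\<^sub>R x)) (at \<mu>)"
      by (auto intro!: derivative_eq_intros)
    have "((\<lambda>l. u (l *\<^sub>R x)) has_derivative (\<lambda>h. Du (\<mu> *\<^sub>R x) (h *\<^sub>R x))) (at \<mu>)"
      by (rule has_derivative_compose[OF sd uder])
    also have "(\<lambda>h. Du (\<mu> *\<^sub>R x) (h *\<^sub>R x)) = (*) (Du (\<mu> *\<^sub>R x) x)"
      by (auto simp: linsc)
    finally have d1: "((\<lambda>l. u (l *\<^sub>R x)) has_real_derivative Du (\<mu> *\<^sub>R x) x) (at \<mu>)"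
      by (simp add: has_field_derivative_def)
    have "((\<lambda>l. gm A b a m (l * norm x)) has_real_derivative Gd A b a m (\<mu> * norm x) * norm x) (at \<mu>)"
      by (rule DERIV_chain2[OF gm_deriv]) (use True R in \<open>auto intro!: derivative_eq_intros\<close>)
    moreover have "GG (\<mu> * norm x) = Gd A b a m (\<mu> * norm x)" using True by (simp add: GG_def)
    ultimately have "((\<lambda>l. gm A b a m (l * norm x)) has_real_derivative GG (\<mu> * norm x) * norm x) (at \<mu>)"
      by simp
    then have d2: "((\<lambda>l. gg (l * norm x)) has_real_derivative GG (\<mu> * norm x) * norm x) (at \<mu>)"
    proof (rule has_field_derivative_transform_within_open[OF _ Oopen muO])
      show "gm A b a m (l * norm x) = gg (l * norm x)" if "l \<in> Op" for l
        using inO[OF that] unfolding gg_def by simp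
    qed
    have d3: "((\<lambda>l. (u (l *\<^sub>R x))^2) has_real_derivative 2 * u (\<mu> *\<^sub>R x) * Du (\<mu> *\<^sub>R x) x) (at \<mu>)"
      using DERIV_power[OF d1, of 2] by (simp add: mult_ac)
    have "((\<lambda>l. (u (l *\<^sub>R x))^2 * gg (l * norm x)) has_real_derivative
        2 * u (\<mu> *\<^sub>R x) * Du (\<mu> *\<^sub>R x) x * gg (\<mu> * norm x) + (u (\<mu> *\<^sub>R x))^2 * (GG (\<mu> * norm x) * norm x)) (at \<mu>)"
      using DERIV_mult[OF d3 d2] by (simp add: algebra_simps)
    then have "((\<lambda>l. (u (l *\<^sub>R x))^2 * gg (l * norm x)) has_real_derivative E \<mu> x) (at \<mu>)"
      unfolding E_def by (simp add: mult_ac)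
    then show ?thesis
    proof (rule has_field_derivative_transform_within_open[OF _ Oopen muO])
      show "(u (l *\<^sub>R x))^2 * gg (l * norm x) = k (l *\<^sub>R x)" if "l \<in> Op" for l
        using inO[OF that] unfolding k_def by simp
    qed
  next
    case False
    define Op where "Op = {l::real. \<bar>l\<bar> * norm x < R}"
    have Oopen: "open Op" unfolding Op_def by (intro open_Collect_less continuous_intros)
    have muO: "\<mu> \<in> Op" unfolding Op_def using False R \<mu> by simp
    have notS: "l *\<^sub>R x \<notin> S" if "l \<in> Op" for l
      using that Snorm[of "l *\<^sub>R x"] unfolding Op_def by auto
    have "((\<lambda>l. 0) has_real_derivative 0) (at \<mu>)" by simp
    then have "((\<lambda>l. k (l *\<^sub>R x)) has_real_derivative 0) (at \<mu>)"
    proof (rule has_field_derivative_transform_within_open[OF _ Oopen muO])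
      show "0 = k (l *\<^sub>R x)" if "l \<in> Op" for l
        using notS[OF that] uS[of "l *\<^sub>R x"] unfolding k_def by auto
    qed
    moreover have "E \<mu> x = 0"
      using notS[OF muO] uS[of "\<mu> *\<^sub>R x"] Du0[OF notS[OF muO]] unfolding E_def by auto
    ultimately show ?thesis by simp
  qed
  obtain M1 where M1: "M1 \<ge> 0" "\<And>y. y \<in> S \<Longrightarrow> \<bar>u y\<bar> \<le> M1"
    using cbound[OF Scpt continuous_on_subset[OF ucont]] by blast
  have sumcont: "continuous_on S (\<lambda>y. \<Sum>i\<in>UNIV. \<bar>Du y (axis i 1)\<bar>)"
    by (intro continuous_intros continuous_on_subset[OF pdcont]) auto
  obtain M2 where M2: "M2 \<ge> 0" "\<And>y. y \<in> S \<Longrightarrow> \<bar>\<Sum>i\<in>UNIV. \<bar>Du y (axis i 1)\<bar>\<bar> \<le> M2"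
    using cbound[OF Scpt sumcont] by blast
  have RBsub: "{R..B} \<subseteq> {0<..}" using R by auto
  obtain M3 where M3: "M3 \<ge> 0" "\<And>r. r \<in> {R..B} \<Longrightarrow> \<bar>gm A b a m r\<bar> \<le> M3"
    using cbound[OF compact_Icc continuous_on_subset[OF gmcont RBsub]] by blast
  obtain M4 where M4: "M4 \<ge> 0" "\<And>r. r \<in> {R..B} \<Longrightarrow> \<bar>Gd A b a m r\<bar> \<le> M4"
    using cbound[OF compact_Icc continuous_on_subset[OF Gdcont RBsub]] by blast
  define C where "C = 2 * M1 * (2 * B * M2) * M3 + M1^2 * M4 * (2 * B)"
  have C0: "C \<ge> 0" unfolding C_def using M1 M2 M3 M4 Bpos by simp
  have bnd: "\<bar>E \<mu> x\<bar> \<le> C * indicator (cball 0 (2*B)) x" if \<mu>: "1/2 \<le> \<mu>" "\<mu> \<le> 2" for x \<mu>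
  proof (cases "\<mu> *\<^sub>R x \<in> S")
    case True
    define y where "y = \<mu> *\<^sub>R x"
    have yS: "y \<in> S" using True y_def by simp
    have ny: "norm y = \<mu> * norm x" unfolding y_def using \<mu> by simp
    have ry: "R \<le> \<mu> * norm x" "\<mu> * norm x \<le> B" using Snorm[OF yS] B(1)[OF yS] ny by auto
    have nx: "norm x \<le> 2 * B"
    proof -
      have "1 * norm x \<le> (2 * \<mu>) * norm x" by (rule mult_right_mono) (use \<mu> in auto)
      then have "norm x \<le> 2 * (\<mu> * norm x)" by simp
      then show ?thesis using ry by linarith
    qed
    then have ind: "indicator (cball 0 (2*B)) x = (1::real)" by (simp add: indicator_def)
    have gg_eq: "gg (\<mu> * norm x) = gm A b a m (\<mu> * norm x)" "GG (\<mu> * norm x) = Gd A b a m (\<mu> * norm x)"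
      unfolding gg_def GG_def using ry R by (auto simp: max_def)
    have Dy: "\<bar>Du y x\<bar> \<le> 2 * B * M2"
    proof -
      have "\<bar>Du y x\<bar> = \<bar>\<Sum>i\<in>UNIV. x$i * Du y (axis i 1)\<bar>" by (subst expand) simp
      also have "\<dots> \<le> (\<Sum>i\<in>UNIV. \<bar>x$i\<bar> * \<bar>Du y (axis i 1)\<bar>)"
        by (rule order_trans[OF sum_abs]) (simp add: abs_mult)
      also have "\<dots> \<le> (\<Sum>i\<in>UNIV. (2 * B) * \<bar>Du y (axis i 1)\<bar>)"
        by (intro sum_mono mult_right_mono order_trans[OF component_le_norm_cart nx]) simp
      also have "\<dots> = 2 * B * (\<Sum>i\<in>UNIV. \<bar>Du y (axis i 1)\<bar>)" by (simp add: sum_distrib_left)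
      also have "\<dots> \<le> 2 * B * M2" using M2(2)[OF yS] Bpos by (intro mult_left_mono) auto
      finally show ?thesis .
    qed
    have uy: "\<bar>u y\<bar> \<le> M1" using M1(2)[OF yS] .
    have g1: "\<bar>gm A b a m (\<mu> * norm x)\<bar> \<le> M3" using M3(2) ry by auto
    have g2: "\<bar>Gd A b a m (\<mu> * norm x)\<bar> \<le> M4" using M4(2) ry by auto
    have "\<bar>E \<mu> x\<bar> \<le> 2 * \<bar>u y\<bar> * \<bar>Du y x\<bar> * \<bar>gm A b a m (\<mu> * norm x)\<bar>
        + \<bar>u y\<bar>^2 * \<bar>Gd A b a m (\<mu> * norm x)\<bar> * norm x"
      unfolding E_def y_def[symmetric] gg_eq
      by (rule order_trans[OF abs_triangle_ineq]) (simp add: abs_mult power2_abs)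
    also have "\<dots> \<le> 2 * M1 * (2 * B * M2) * M3 + M1^2 * M4 * (2 * B)"
    proof (rule add_mono)
      show "2 * \<bar>u y\<bar> * \<bar>Du y x\<bar> * \<bar>gm A b a m (\<mu> * norm x)\<bar> \<le> 2 * M1 * (2 * B * M2) * M3"
        using uy Dy g1 by (intro mult_mono) auto
      show "\<bar>u y\<bar>^2 * \<bar>Gd A b a m (\<mu> * norm x)\<bar> * norm x \<le> M1^2 * M4 * (2 * B)"
        using uy g2 nx M1 by (intro mult_mono power_mono) auto
    qed
    finally show ?thesis using ind C_def by simp
  next
    case False
    then have "E \<mu> x = 0" using uS[of "\<mu> *\<^sub>R x"] Du0[OF False] unfolding E_def by auto
    then show ?thesis using C0 by simp
  qed
  have euler: "integrable lborel (E 1)" "integral\<^sup>L lborel (E 1) = - real CARD('n) * integral\<^sup>L lborel k"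
    using euler_scaling[of k B E C, OF kcont _ ksupp deriv bnd] Bpos by auto

  have kint: "integrable lborel k"
    by (rule int_cpt[OF continuous_on_subset[OF kcont] compact_cball[of 0 B]]) (use ksupp in auto)
  define \<rho> where "\<rho> x = model_density \<psi> x" for x :: "real^'n"
  have rho_nonneg: "\<rho> x \<ge> 0" for x
    unfolding \<rho>_def model_density_def using psi_nonneg by simp
  have rho_eq: "\<rho> x = rhom A b a m (norm x)" if "R \<le> norm x" for x
    unfolding \<rho>_def model_density_def rhom_def m_def using psi_tail that by simp
  have s_eq: "radial_deriv u x = Du x x / norm x" for x
  proof -
    have "radial_deriv u x = Du x (inverse (norm x) *\<^sub>R x)" unfolding radial_deriv_def Du_def
      by (simp add: divide_inverse_commute)
    also have "\<dots> = Du x x / norm x" by (simp add: linsc divide_inverse_commute)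
    finally show ?thesis .
  qed
  have s0: "radial_deriv u x = 0" if "x \<notin> S" for x using Du0[OF that] s_eq by simp
  have u0: "u x = 0" if "x \<notin> S" for x using uS that by blast
  have Spos: "\<forall>x\<in>S. 0 < norm x" using Snorm R by force
  have rhoScont: "continuous_on S (\<lambda>x. rhom A b a m (norm x))"
    by (rule continuous_on_compose2[OF rhomcont]) (use Spos in \<open>auto intro: continuous_intros\<close>)
  have congS: "continuous_on S f" if "continuous_on S g" "\<And>x. x \<in> S \<Longrightarrow> f x = g x" for f g :: "real^'n \<Rightarrow> real"
    using continuous_on_cong that by blast
  define c1 where "c1 = ((real CARD('n) - 1) / 2)\<^sup>2 * (a + 1)\<^sup>2 * b\<^sup>2"
  define c3 where "c3 = 2 * b * a * (a + 1) * (real CARD('n) - 1) / 4"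
  define fS where "fS x = (radial_deriv u x)\<^sup>2 * model_density \<psi> x" for x
  define f1 where "f1 x = (norm x powr (2 * a) * (u x)\<^sup>2) * model_density \<psi> x" for x
  define f2 where "f2 x = ((u x)\<^sup>2 / (norm x)\<^sup>2) * model_density \<psi> x" for x
  define f3 where "f3 x = (norm x powr (a - 1) * (u x)\<^sup>2) * model_density \<psi> x" for x
  define T where "T x = E 1 x + real CARD('n) * k x" for x
  have fSint: "integrable lborel fS"
  proof (rule int_cpt[OF _ Scpt])
    show "continuous_on S fS"
    proof (rule congS)
      show "continuous_on S (\<lambda>x. (Du x x / norm x)\<^sup>2 * rhom A b a m (norm x))"
        by (intro continuous_intros rhoScont continuous_on_subset[OF Dxcont]) (use Spos in auto)
      show "fS x = (Du x x / norm x)\<^sup>2 * rhom A b a m (norm x)" if "x \<in> S" for x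
        unfolding fS_def \<rho>_def[symmetric] using rho_eq Snorm that s_eq by simp
    qed
  qed (simp add: fS_def s0)
  have f1int: "integrable lborel f1"
  proof (rule int_cpt[OF _ Scpt])
    show "continuous_on S f1"
    proof (rule congS)
      show "continuous_on S (\<lambda>x. (norm x powr (2 * a) * (u x)\<^sup>2) * rhom A b a m (norm x))"
        by (intro continuous_intros rhoScont continuous_on_subset[OF ucont]) (use Spos in auto)
      show "f1 x = (norm x powr (2 * a) * (u x)\<^sup>2) * rhom A b a m (norm x)" if "x \<in> S" for x
        unfolding f1_def \<rho>_def[symmetric] using rho_eq Snorm that by simp
    qed
  qed (simp add: f1_def u0)
  have f2int: "integrable lborel f2"
  proof (rule int_cpt[OF _ Scpt])
    show "continuous_on S f2"
    proof (rule congS)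
      show "continuous_on S (\<lambda>x. ((u x)\<^sup>2 / (norm x)\<^sup>2) * rhom A b a m (norm x))"
        by (intro continuous_intros rhoScont continuous_on_subset[OF ucont]) (use Spos in auto)
      show "f2 x = ((u x)\<^sup>2 / (norm x)\<^sup>2) * rhom A b a m (norm x)" if "x \<in> S" for x
        unfolding f2_def \<rho>_def[symmetric] using rho_eq Snorm that by simp
    qed
  qed (simp add: f2_def u0)
  have f3int: "integrable lborel f3"
  proof (rule int_cpt[OF _ Scpt])
    show "continuous_on S f3"
    proof (rule congS)
      show "continuous_on S (\<lambda>x. (norm x powr (a - 1) * (u x)\<^sup>2) * rhom A b a m (norm x))"
        by (intro continuous_intros rhoScont continuous_on_subset[OF ucont]) (use Spos in auto)
      show "f3 x = (norm x powr (a - 1) * (u x)\<^sup>2) * rhom A b a m (norm x)" if "x \<in> S" for x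
        unfolding f3_def \<rho>_def[symmetric] using rho_eq Snorm that by simp
    qed
  qed (simp add: f3_def u0)
  have Tint: "integrable lborel T" unfolding T_def using euler(1) kint by simp
  have T0: "integral\<^sup>L lborel T = 0" unfolding T_def using euler kint by simp
  have pw: "c1 * f1 x + 1 / 4 * f2 x + c3 * f3 x \<le> fS x + T x" for x
  proof (cases "u x = 0")
    case True
    have "E 1 x = 0" "k x = 0" using True unfolding E_def k_def by auto
    then show ?thesis using True rho_nonneg[of x]
      unfolding f1_def f2_def f3_def fS_def T_def \<rho>_def by simp
  next
    case False
    have xS: "x \<in> S" using uS False .
    have r: "R \<le> norm x" using Snorm xS .
    have rp: "norm x > 0" using r R by linarith
    have P: "rhom A b a m (norm x) \<ge> 0" using rho_nonneg[of x] rho_eq[OF r] by simp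
    have gge: "gg (norm x) = gm A b a m (norm x)" "GG (norm x) = Gd A b a m (norm x)"
      unfolding gg_def GG_def using r R by (auto simp: max_def)
    have E1: "E 1 x = 2 * u x * Du x x * gm A b a m (norm x) + (u x)^2 * Gd A b a m (norm x) * norm x"
      unfolding E_def using gge by simp
    have md: "model_density \<psi> x = rhom A b a m (norm x)" using rho_eq[OF r] unfolding \<rho>_def .
    show ?thesis
      using key_alg[OF rp P, where D="Du x x" and U="u x"]
      unfolding f1_def f2_def f3_def fS_def T_def c1_def c3_def md s_eq E1 k_def gge nm1 nm
      by (simp add: mult_ac)
  qed
  have "integral\<^sup>L lborel (\<lambda>x. c1 * f1 x + 1 / 4 * f2 x + c3 * f3 x) \<le> integral\<^sup>L lborel (\<lambda>x. fS x + T x)"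
    by (rule integral_mono) (use f1int f2int f3int fSint Tint pw in auto)
  also have "integral\<^sup>L lborel (\<lambda>x. fS x + T x) = integral\<^sup>L lborel fS"
    using fSint Tint T0 by simp
  also have "integral\<^sup>L lborel (\<lambda>x. c1 * f1 x + 1 / 4 * f2 x + c3 * f3 x)
      = c1 * integral\<^sup>L lborel f1 + 1 / 4 * integral\<^sup>L lborel f2 + c3 * integral\<^sup>L lborel f3"
    using f1int f2int f3int by simp
  finally show ?thesis
    unfolding model_integral_def c1_def c3_def fS_def f1_def f2_def f3_def .
qed

end
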